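(* Every Taylor graph is pseudo-vertex-transitive.
   Context: A Taylor graph is a distance-regular graph with intersection array $\{k,b,1;1,b,k\}$ where $b<k-1$; it has diameter $D=3$. Let $\Gamma$ have vertex set $X$, distance $\partial$, adjacency matrix $A$, and $V=\mathbb{C}^X$. For $x\in X$ and $0\le i\le D$ let $E^*_i(x)$ be the diagonal matrix with $(E^*_i(x))_{yy}=1$ if $\partial(x,y)=i$ and $0$ otherwise. The Terwilliger algebra $T(x)$ is the subalgebra of $\mathrm{Mat}_X(\mathbb{C})$ generated by $A,E^*_0(x),\dots,E^*_D(x)$. The graph $\Gamma$ is pseudo-vertex-transitive if for all $x,y\in X$: (i) there is a $\mathbb{C}$-algebra isomorphism $T(x)\to T(y)$ sending $A\mapsto A$ and $E^*_i(x)\mapsto E^*_i(y)$ for all $i$; and (ii) there is a $\mathbb{C}$-linear bijection $\rho:V\to V$ with $\rho A=A\rho$ and $\rho E^*_i(x)=E^*_i(y)\rho$ for all $i$. *)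

theory Defs
  imports "HOL-Analysis.Analysis"
begin

text \<open>Graphs: vertex set = a finite type 'a, adjacency = a relation E.
  Matrices in Mat_X(C) are elements of complex^'a^'a, V = complex^'a.\<close>

definition simple_graph :: "('a \<Rightarrow> 'a \<Rightarrow> bool) \<Rightarrow> bool" where
  "simple_graph E \<longleftrightarrow> (\<forall>x y. E x y \<longleftrightarrow> E y x) \<and> (\<forall>x. \<not> E x x)"

definition connected_graph :: "('a \<Rightarrow> 'a \<Rightarrow> bool) \<Rightarrow> bool" where
  "connected_graph E \<longleftrightarrow> (\<forall>x y. \<exists>n. (E ^^ n) x y)"

definition gdist :: "('a \<Rightarrow> 'a \<Rightarrow> bool) \<Rightarrow> 'a \<Rightarrow> 'a \<Rightarrow> nat" where
  "gdist E x y = (LEAST n. (E ^^ n) x y)"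

text \<open>Distance-regular graph of diameter D with intersection array
  {b 0, ..., b (D-1); c 1, ..., c D}.\<close>
definition distance_regular_ia ::
  "('a::finite \<Rightarrow> 'a \<Rightarrow> bool) \<Rightarrow> (nat \<Rightarrow> nat) \<Rightarrow> (nat \<Rightarrow> nat) \<Rightarrow> nat \<Rightarrow> bool" where
  "distance_regular_ia E b c D \<longleftrightarrow>
     simple_graph E \<and> connected_graph E \<and>
     (\<forall>x y. gdist E x y \<le> D) \<and> (\<exists>x y. gdist E x y = D) \<and>
     (\<forall>x y i. gdist E x y = i \<and> i < D \<longrightarrow>
        card {z. E y z \<and> gdist E x z = i + 1} = b i) \<and>
     (\<forall>x y i. gdist E x y = i \<and> 1 \<le> i \<and> i \<le> D \<longrightarrow>
        card {z. E y z \<and> gdist E x z = i - 1} = c i)"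

text \<open>Taylor graph: intersection array {k, b, 1; 1, b, k} with b < k - 1, D = 3.\<close>
definition taylor_graph :: "('a::finite \<Rightarrow> 'a \<Rightarrow> bool) \<Rightarrow> bool" where
  "taylor_graph E \<longleftrightarrow> (\<exists>k bb::nat. bb < k - 1 \<and>
     distance_regular_ia E
       (\<lambda>i. if i = 0 then k else if i = 1 then bb else 1)
       (\<lambda>i. if i = 1 then 1 else if i = 2 then bb else k) 3)"

definition adj_matrix :: "('a::finite \<Rightarrow> 'a \<Rightarrow> bool) \<Rightarrow> complex^'a^'a" where
  "adj_matrix E = (\<chi> y z. if E y z then 1 else 0)"

definition dual_idem :: "('a::finite \<Rightarrow> 'a \<Rightarrow> bool) \<Rightarrow> 'a \<Rightarrow> nat \<Rightarrow> complex^'a^'a" where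
  "dual_idem E x i = (\<chi> y z. if y = z \<and> gdist E x y = i then 1 else 0)"

definition cmat_scale :: "complex \<Rightarrow> complex^'a^'a \<Rightarrow> complex^'a^'a" where
  "cmat_scale c M = (\<chi> i j. c * M $ i $ j)"

inductive_set gen_algebra :: "(complex^'a::finite^'a) set \<Rightarrow> (complex^'a^'a) set"
  for S where
    gen: "M \<in> S \<Longrightarrow> M \<in> gen_algebra S"
  | one: "mat 1 \<in> gen_algebra S"
  | add: "M \<in> gen_algebra S \<Longrightarrow> N \<in> gen_algebra S \<Longrightarrow> M + N \<in> gen_algebra S"
  | scale: "M \<in> gen_algebra S \<Longrightarrow> cmat_scale c M \<in> gen_algebra S"
  | mult: "M \<in> gen_algebra S \<Longrightarrow> N \<in> gen_algebra S \<Longrightarrow> M ** N \<in> gen_algebra S"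

definition terwilliger :: "('a::finite \<Rightarrow> 'a \<Rightarrow> bool) \<Rightarrow> nat \<Rightarrow> 'a \<Rightarrow> (complex^'a^'a) set" where
  "terwilliger E D x = gen_algebra (insert (adj_matrix E) {dual_idem E x i | i. i \<le> D})"

definition calg_iso ::
  "(complex^'a::finite^'a \<Rightarrow> complex^'a^'a) \<Rightarrow> (complex^'a^'a) set \<Rightarrow> (complex^'a^'a) set \<Rightarrow> bool" where
  "calg_iso \<phi> T T' \<longleftrightarrow> bij_betw \<phi> T T' \<and>
     (\<forall>M\<in>T. \<forall>N\<in>T. \<phi> (M + N) = \<phi> M + \<phi> N \<and> \<phi> (M ** N) = \<phi> M ** \<phi> N) \<and>
     (\<forall>M\<in>T. \<forall>c. \<phi> (cmat_scale c M) = cmat_scale c (\<phi> M)) \<and>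
     \<phi> (mat 1) = mat 1"

definition clinear_vec :: "(complex^'a \<Rightarrow> complex^'a) \<Rightarrow> bool" where
  "clinear_vec \<rho> \<longleftrightarrow> (\<forall>u v. \<rho> (u + v) = \<rho> u + \<rho> v) \<and> (\<forall>c v. \<rho> (c *s v) = c *s \<rho> v)"

definition pseudo_vertex_transitive :: "('a::finite \<Rightarrow> 'a \<Rightarrow> bool) \<Rightarrow> nat \<Rightarrow> bool" where
  "pseudo_vertex_transitive E D \<longleftrightarrow> (\<forall>x y.
     (\<exists>\<phi>. calg_iso \<phi> (terwilliger E D x) (terwilliger E D y) \<and>
          \<phi> (adj_matrix E) = adj_matrix E \<and>
          (\<forall>i\<le>D. \<phi> (dual_idem E x i) = dual_idem E y i)) \<and>
     (\<exists>\<rho>. clinear_vec \<rho> \<and> bij \<rho> \<and>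
          (\<forall>v. \<rho> (adj_matrix E *v v) = adj_matrix E *v \<rho> v) \<and>
          (\<forall>i\<le>D. \<forall>v. \<rho> (dual_idem E x i *v v) = dual_idem E y i *v \<rho> v)))"

end

theory Submission
  imports Defs
begin


lemma relpowp_sym:
  assumes "\<And>x y. E x y \<longleftrightarrow> E y x"
  shows "(E ^^ n) x y \<Longrightarrow> (E ^^ n) y x"
proof (induction n arbitrary: x y)
  case 0 then show ?case by simp
next
  case (Suc n)
  then obtain z where "(E ^^ n) x z" "E z y" by auto
  then show ?case using Suc.IH assms by (meson relpowp_Suc_I2)
qed

locale taylor_ctx =
  fixes E :: "'a::finite \<Rightarrow> 'a \<Rightarrow> bool" and k bb :: nat
  assumes bbk: "bb < k - 1"
  and dr: "distance_regular_ia E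
       (\<lambda>i. if i = 0 then k else if i = 1 then bb else 1)
       (\<lambda>i. if i = 1 then 1 else if i = 2 then bb else k) 3"
begin

abbreviation "d \<equiv> gdist E"

lemma symE: "E x y \<longleftrightarrow> E y x" and irrE: "\<not> E x x"
  using dr unfolding distance_regular_ia_def simple_graph_def by auto

lemma connE: "\<exists>n. (E ^^ n) x y"
  using dr unfolding distance_regular_ia_def connected_graph_def by auto

lemma d_le3: "d x y \<le> 3"
  using dr unfolding distance_regular_ia_def by auto

lemma d_ex3: "\<exists>x y. d x y = 3"
  using dr unfolding distance_regular_ia_def by auto

lemma bcount: "d x y = i \<Longrightarrow> i < 3 \<Longrightarrow>
   card {z. E y z \<and> d x z = i + 1} = (if i = 0 then k else if i = 1 then bb else 1)"
proof -
  have h: "\<forall>x y i. gdist E x y = i \<and> i < 3 \<longrightarrow> card {z. E y z \<and> gdist E x z = i + 1} = (if i = 0 then k else if i = 1 then bb else 1)"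
    using dr unfolding distance_regular_ia_def by (elim conjE) assumption
  assume "d x y = i" "i < 3" then show ?thesis using h by blast
qed

lemma ccount: "d x y = i \<Longrightarrow> 1 \<le> i \<Longrightarrow> i \<le> 3 \<Longrightarrow>
   card {z. E y z \<and> d x z = i - 1} = (if i = 1 then 1 else if i = 2 then bb else k)"
proof -
  have h: "\<forall>x y i. gdist E x y = i \<and> 1 \<le> i \<and> i \<le> 3 \<longrightarrow> card {z. E y z \<and> gdist E x z = i - 1} = (if i = 1 then 1 else if i = 2 then bb else k)"
    using dr unfolding distance_regular_ia_def by (elim conjE) assumption
  assume "d x y = i" "1 \<le> i" "i \<le> 3" then show ?thesis using h by blast
qed

lemma d_path: "(E ^^ d x y) x y"
  unfolding gdist_def using connE by (rule LeastI_ex)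

lemma d_le: "(E ^^ n) x y \<Longrightarrow> d x y \<le> n"
  unfolding gdist_def by (rule Least_le)

lemma d_sym: "d x y = d y x"
  using d_le d_path relpowp_sym[of E, OF symE] by (meson le_antisym)

lemma d_0: "d x y = 0 \<longleftrightarrow> x = y"
proof
  assume "d x y = 0" then show "x = y" using d_path[of x y] by simp
next
  assume "x = y" then show "d x y = 0" using d_le[of 0 x y] by simp
qed

lemma d_1: "d x y = 1 \<longleftrightarrow> E x y"
proof
  assume "d x y = 1" then show "E x y" using d_path[of x y] by (simp add: relcompp_apply)
next
  assume e: "E x y"
  then have "d x y \<le> 1" using d_le[of 1 x y] by (auto simp: relcompp_apply)
  moreover have "x \<noteq> y" using e irrE by auto
  ultimately show "d x y = 1" using d_0 by (metis le_antisym less_one not_le)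
qed

lemma d_step: "E y z \<Longrightarrow> d x z \<le> d x y + 1"
  using d_le[of "Suc (d x y)" x z] d_path[of x y] by auto

lemma d_step2: "E y z \<Longrightarrow> d x y \<le> d x z + 1"
  using d_step symE by blast

lemma d_pred: "d x y = Suc n \<Longrightarrow> \<exists>z. E z y \<and> d x z = n"
proof -
  assume h: "d x y = Suc n"
  then obtain z where z: "(E ^^ n) x z" "E z y" using d_path[of x y] by auto
  then have "d x z \<le> n" using d_le by auto
  moreover have "d x y \<le> d x z + 1" using d_step z(2) by auto
  ultimately show ?thesis using h z by (intro exI[of _ z]) auto
qed

lemma card_filter_sum: "card {z::'a. P z} = (\<Sum>z\<in>UNIV. if P z then 1 else 0 :: nat)"
proof -
  have "card {z. P z} = (\<Sum>z\<in>{z\<in>UNIV. P z}. 1::nat)" by simp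
  also have "\<dots> = (\<Sum>z\<in>UNIV. if P z then 1 else 0 :: nat)" by (rule sum.inter_filter) simp
  finally show ?thesis .
qed


end


context taylor_ctx begin

lemma sum_Collect: "(\<Sum>u\<in>{u::'a. P u}. f u) = (\<Sum>u\<in>UNIV. if P u then f u else 0)"
  using sum.inter_filter[of UNIV f P] by simp

lemma double_count:
  "(\<Sum>u\<in>{u. P u}. card {z. E u z \<and> Q z}) = (\<Sum>z\<in>{z. Q z}. card {u. E z u \<and> P u})"
proof -
  have "(\<Sum>u\<in>{u. P u}. card {z. E u z \<and> Q z}) =
        (\<Sum>u\<in>UNIV. \<Sum>z\<in>UNIV. if P u \<and> E u z \<and> Q z then 1 else 0)"
    unfolding sum_Collect card_filter_sum by (rule sum.cong) auto
  also have "\<dots> = (\<Sum>z\<in>UNIV. \<Sum>u\<in>UNIV. if P u \<and> E u z \<and> Q z then 1 else 0)"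
    by (rule sum.swap)
  also have "\<dots> = (\<Sum>z\<in>{z. Q z}. card {u. E z u \<and> P u})"
    unfolding sum_Collect card_filter_sum by (intro sum.cong refl) (auto simp: symE intro!: sum.cong)
  finally show ?thesis .
qed

lemma d_refl[simp]: "d x x = 0" using d_0 by simp

lemma bcount1: "d x y = 1 \<Longrightarrow> card {z. E y z \<and> d x z = 2} = bb"
proof -
  assume h: "d x y = 1"
  have "card {z. E y z \<and> d x z = 1 + 1} = bb" using bcount[OF h] by simp
  then show ?thesis by (simp add: numeral_2_eq_2)
qed

lemma deg: "card {z. E y z} = k"
  using bcount[of y y 0] d_0 d_1 by simp

lemma k_ge2: "k \<ge> 2" using bbk by simp

lemma bb_pos: "bb \<ge> 1"
proof -
  obtain x y where "d x y = 3" using d_ex3 by blast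
  then obtain z where z: "E z y" "d x z = 2" using d_pred[of x y 2] by auto
  then obtain u where u: "E u z" "d x u = 1" using d_pred[of x z 1] by auto
  have "card {w. E z w \<and> d x w = 1} = bb" using ccount[of x z 2] z by simp
  moreover have "u \<in> {w. E z w \<and> d x w = 1}" using u symE by auto
  ultimately show ?thesis
    by (metis One_nat_def Suc_leI card_gt_0_iff empty_iff finite)
qed

lemma card_G1: "card {z. d x z = 1} = k"
  using deg[of x] d_1 by simp

lemma card_G2: "card {z. d x z = 2} = k"
proof -
  have "(\<Sum>u\<in>{u. d x u = 1}. card {z. E u z \<and> d x z = 2}) = (\<Sum>u\<in>{u. d x u = 1}. bb)"
    using bcount1[of x] by (intro sum.cong) auto
  moreover have "(\<Sum>z\<in>{z. d x z = 2}. card {u. E z u \<and> d x u = 1}) = (\<Sum>z\<in>{z. d x z = 2}. bb)"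
    using ccount[of x _ 2] by (intro sum.cong) auto
  moreover have "(\<Sum>u\<in>{u. d x u = 1}. bb) = k * bb" using card_G1[of x] by simp
  moreover have "(\<Sum>u\<in>{u. d x u = 2}. bb) = card {z. d x z = 2} * bb" by simp
  ultimately have "k * bb = card {z. d x z = 2} * bb"
    using double_count[of "\<lambda>u. d x u = 1" "\<lambda>z. d x z = 2"] by linarith
  then show ?thesis using bb_pos by simp
qed

lemma card_G3: "card {z. d x z = 3} = 1"
proof -
  have "(\<Sum>u\<in>{u. d x u = 2}. card {z. E u z \<and> d x z = 3}) = (\<Sum>u\<in>{u. d x u = 2}. 1)"
    using bcount[of x _ 2] by (intro sum.cong) auto
  moreover have "(\<Sum>z\<in>{z. d x z = 3}. card {u. E z u \<and> d x u = 2}) = (\<Sum>z\<in>{z. d x z = 3}. k)"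
    using ccount[of x _ 3] by (intro sum.cong) auto
  moreover have "(\<Sum>u\<in>{u. d x u = 2}. 1) = k" using card_G2[of x] by simp
  moreover have "(\<Sum>u\<in>{u. d x u = 3}. k) = card {z. d x z = 3} * k" by simp
  ultimately have "k = card {z. d x z = 3} * k"
    using double_count[of "\<lambda>u. d x u = 2" "\<lambda>z. d x z = 3"] by linarith
  then show ?thesis using k_ge2 by simp
qed

definition ant :: "'a \<Rightarrow> 'a" where "ant x = (THE z. d x z = 3)"

lemma ant_d: "d x (ant x) = 3" and ant_uniq: "d x z = 3 \<Longrightarrow> z = ant x"
proof -
  obtain w where w: "{z. d x z = 3} = {w}" using card_G3[of x] by (rule card_1_singletonE)
  then have "ant x = w" unfolding ant_def by auto
  then show "d x (ant x) = 3" using w by auto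
  show "d x z = 3 \<Longrightarrow> z = ant x" using w \<open>ant x = w\<close> by auto
qed

lemma nbr_ant: "{z. E (ant x) z} = {z. d x z = 2}"
proof (rule card_subset_eq)
  show "{z. E (ant x) z} \<subseteq> {z. d x z = 2}"
  proof
    fix z assume "z \<in> {z. E (ant x) z}"
    then have e: "E (ant x) z" by simp
    have "3 \<le> d x z + 1" using d_step2[OF e, of x] ant_d[of x] by simp
    moreover have "d x z \<noteq> 3" using ant_uniq[of x z] e irrE by auto
    ultimately show "z \<in> {z. d x z = 2}" using d_le3[of x z] by simp
  qed
qed (auto simp: deg card_G2)

lemma d_ant: "d (ant x) z = 3 - d x z"
proof -
  have "d x z \<le> 3" by (rule d_le3)
  then consider "d x z = 0" | "d x z = 1" | "d x z = 2" | "d x z = 3" by linarith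
  then show ?thesis
  proof cases
    case 1 then show ?thesis using d_0 ant_d[of x] d_sym by auto
  next
    case 2
    have a: "ant (ant x) = x" using ant_uniq[of "ant x" x] ant_d[of x] d_sym by auto
    have en: "E (ant x) z \<Longrightarrow> d x z = 2" using nbr_ant[of x] by blast
    have "d (ant x) z \<noteq> 0" using 2 ant_d[of x] d_0 by auto
    moreover have "d (ant x) z \<noteq> 1" using 2 en d_1 by auto
    moreover have "d (ant x) z \<noteq> 3" using 2 ant_uniq[of "ant x" z] a d_0 by auto
    ultimately show ?thesis using 2 d_le3[of "ant x" z] by simp
  next
    case 3 then show ?thesis using nbr_ant[of x] d_1 by auto
  next
    case 4 then show ?thesis using ant_uniq[of x z] d_0 by auto
  qed
qed

lemma ant_ant[simp]: "ant (ant x) = x"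
  using ant_uniq[of "ant x" x] ant_d[of x] d_sym by auto

lemma d_ant2: "d z (ant w) = 3 - d z w"
  using d_ant[of w z] d_sym by metis

lemma d_ant_ant[simp]: "d (ant u) (ant w) = d u w"
  using d_ant[of u "ant w"] d_ant2[of u w] d_le3[of u w] by simp

lemma E_ant[simp]: "E (ant u) (ant w) \<longleftrightarrow> E u w"
  using d_ant_ant d_1 by metis

lemma ant_ne[simp]: "ant x \<noteq> x"
  using ant_d[of x] d_0 by force

lemma ant_inj[simp]: "ant u = ant w \<longleftrightarrow> u = w"
  by (metis ant_ant)

lemma cn: "card {u. E w u \<and> E u z} =
  (if d w z = 0 then k else if d w z = 1 then k - 1 - bb else if d w z = 2 then bb else 0)"
proof -
  have eq: "{u. E w u \<and> E u z} = {u. E z u \<and> d w u = 1}" using symE d_1 by auto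
  have "d w z \<le> 3" by (rule d_le3)
  then consider "d w z = 0" | "d w z = 1" | "d w z = 2" | "d w z = 3" by linarith
  then show ?thesis
  proof cases
    case 1 then have "z = w" using d_0 by auto
    then show ?thesis unfolding eq using deg[of w] d_1 by simp
  next
    case 2
    have s: "{u. E z u} = {u. E z u \<and> d w u = 0} \<union> ({u. E z u \<and> d w u = 1} \<union> {u. E z u \<and> d w u = 2})"
      using d_step[of z _ w] 2 by fastforce
    have c0: "card {u. E z u \<and> d w u = 0} = 1" using ccount[of w z 1] 2 by simp
    have c2: "card {u. E z u \<and> d w u = 2} = bb" using bcount1[of w z] 2 by simp
    have "k = card {u. E z u \<and> d w u = 0} + (card {u. E z u \<and> d w u = 1} + card {u. E z u \<and> d w u = 2})"
      unfolding deg[of z, symmetric] s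
      by (subst card_Un_disjoint, auto)+
    then show ?thesis unfolding eq using c0 c2 2 by simp
  next
    case 3 then show ?thesis unfolding eq using ccount[of w z 2] by simp
  next
    case 4
    have "{u. E z u \<and> d w u = 1} = {}" using d_step2[of z _ w] 4 by fastforce
    then show ?thesis unfolding eq using 4 by simp
  qed
qed

end


lemma vec_eqI: "(\<And>i. x$i = y$i) \<Longrightarrow> x = y" by (simp add: vec_eq_iff)

definition outer :: "real^'n \<Rightarrow> real^'n \<Rightarrow> real^'n^'n" where
  "outer u v = (\<chi> i j. u$i * v$j)"

lemma outer_v: "outer u w *v v = inner w v *\<^sub>R u"
  by (simp add: vec_eq_iff outer_def matrix_vector_mult_def inner_vec_def sum_distrib_left mult.commute mult.left_commute)

lemma if10_mult: "(if P then 1 else 0) * (x::real) = (if P then x else 0)" by simp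

lemma diag_v: "(\<chi> w z. if w = z then f w else 0) *v (v::real^'n) = (\<chi> w. f w * v$w)"
proof -
  have "\<And>w. (\<Sum>z\<in>UNIV. (if w = z then f w else 0) * v$z) = f w * v$w"
    by (simp add: if_distrib[of "\<lambda>t. t * _"] cong: if_cong)
  then show ?thesis by (simp add: vec_eq_iff matrix_vector_mult_def)
qed

definition onev :: "real^'n" where "onev = (\<chi> w. 1)"

lemma onev_comp[simp]: "onev $ w = 1" by (simp add: onev_def)

context taylor_ctx begin

definition Am :: "real^'a^'a" where "Am = (\<chi> w z. if E w z then 1 else 0)"
definition Pa :: "real^'a^'a" where "Pa = (\<chi> w z. if z = ant w then 1 else 0)"
definition Dl :: "'a \<Rightarrow> real^'a^'a" where
  "Dl x = (\<chi> w z. if w = z then (if d x w \<le> 1 then 1 else -1) else 0)"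
definition F0 :: "'a \<Rightarrow> real^'a^'a" where
  "F0 x = (\<chi> w z. if w = z \<and> (w = x \<or> w = ant x) then 1 else 0)"
definition Es :: "'a \<Rightarrow> nat \<Rightarrow> real^'a^'a" where
  "Es x i = (\<chi> w z. if w = z \<and> d x w = i then 1 else 0)"
definition av :: "'a \<Rightarrow> real^'a" where
  "av x = (\<chi> w. (if w = x then 1 else 0) - (if w = ant x then 1 else 0))"
definition Pmm :: "real^'a^'a" where "Pmm = (1/2) *\<^sub>R (mat 1 - Pa)"

lemma Am_v: "(Am *v v) $ w = (\<Sum>z\<in>UNIV. if E w z then v$z else 0)"
  by (simp add: Am_def matrix_vector_mult_def if10_mult)

lemma Pa_v: "Pa *v v = (\<chi> w. v $ ant w)"
  by (simp add: vec_eq_iff Pa_def matrix_vector_mult_def if10_mult)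

lemma Dl_v: "Dl x *v v = (\<chi> w. if d x w \<le> 1 then v$w else - v$w)"
proof -
  have eq: "Dl x = (\<chi> w z. if w = z then (if d x w \<le> 1 then 1 else -1) else 0)" by (simp add: Dl_def)
  show ?thesis unfolding eq diag_v by (simp add: vec_eq_iff)
qed

lemma F0_v: "F0 x *v v = (\<chi> w. if w = x \<or> w = ant x then v$w else 0)"
proof -
  have eq: "F0 x = (\<chi> w z. if w = z then (if w = x \<or> w = ant x then 1 else 0) else 0)"
    by (simp add: F0_def vec_eq_iff)
  show ?thesis unfolding eq diag_v by (simp add: vec_eq_iff)
qed

lemma Es_v: "Es x i *v v = (\<chi> w. if d x w = i then v$w else 0)"
proof -
  have eq: "Es x i = (\<chi> w z. if w = z then (if d x w = i then 1 else 0) else 0)"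
    by (simp add: Es_def vec_eq_iff)
  show ?thesis unfolding eq diag_v by (simp add: vec_eq_iff)
qed

lemma Pmm_v: "Pmm *v v = (1/2) *\<^sub>R (v - Pa *v v)"
  by (simp add: Pmm_def scaleR_matrix_vector_assoc[symmetric] matrix_vector_mult_diff_rdistrib)

end


lemma sym_inner: "transpose M = M \<Longrightarrow> inner u (M *v v) = inner (M *v u) (v::real^'n)"
  by (metis dot_lmul_matrix transpose_matrix_vector)

lemma sum_if_const: "(\<Sum>u\<in>UNIV. if P u then t else 0) = real (card {u::'n::finite. P u}) * t"
proof -
  have "(\<Sum>u\<in>UNIV. if P u then t else 0) = (\<Sum>u\<in>{u\<in>UNIV. P u}. t)"
    by (rule sum.inter_filter[symmetric]) simp
  then show ?thesis by simp
qed

lemma sum_delta2: "(\<Sum>z\<in>UNIV. if P z then (if z = (a::'n::finite) then 1 else 0) - (if z = b then 1 else 0) else 0)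
   = (if P a then 1 else 0) - (if P b then 1 else (0::real))"
proof -
  have "(\<Sum>z\<in>UNIV. if P z then (if z = a then 1 else 0) - (if z = b then 1 else 0) else 0)
     = (\<Sum>z\<in>UNIV. (if z = a then (if P z then 1 else 0) else 0) - (if z = b then (if P z then 1 else 0) else (0::real)))"
    by (rule sum.cong) auto
  also have "\<dots> = (if P a then 1 else 0) - (if P b then 1 else (0::real))"
    by (simp add: sum_subtractf)
  finally show ?thesis .
qed

context taylor_ctx begin

lemma ant_ne2[simp]: "x \<noteq> ant x" using ant_ne by metis

lemma dist_cases:
  obtains "d w z = 0" "z = w" "\<not> E w z" "z \<noteq> ant w"
  | "d w z = 1" "E w z" "z \<noteq> w" "z \<noteq> ant w"
  | "d w z = 2" "\<not> E w z" "z \<noteq> w" "z \<noteq> ant w"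
  | "d w z = 3" "\<not> E w z" "z \<noteq> w" "z = ant w"
proof -
  have "d w z \<le> 3" by (rule d_le3)
  then consider "d w z = 0" | "d w z = 1" | "d w z = 2" | "d w z = 3" by linarith
  then show ?thesis
  proof cases
    case 1
    then have zw: "z = w" using d_0[of w z] by simp
    show ?thesis by (rule that(1)) (use 1 zw irrE[of w] in auto)
  next
    case 2
    have "E w z" using 2 d_1[of w z] by simp
    moreover have "z \<noteq> w" using 2 by auto
    moreover have "z \<noteq> ant w" using 2 ant_d[of w] by auto
    ultimately show ?thesis by (rule that(2)[OF 2])
  next
    case 3
    have "\<not> E w z" using 3 d_1[of w z] by simp
    moreover have "z \<noteq> w" using 3 by auto
    moreover have "z \<noteq> ant w" using 3 ant_d[of w] by auto
    ultimately show ?thesis by (rule that(3)[OF 3])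
  next
    case 4
    have "\<not> E w z" using 4 d_1[of w z] by simp
    moreover have "z \<noteq> w" using 4 by auto
    moreover have "z = ant w" using 4 ant_uniq[of w z] by auto
    ultimately show ?thesis by (rule that(4)[OF 4])
  qed
qed

lemma E_ant2: "E w (ant z) \<longleftrightarrow> d w z = 2"
  using d_ant2[of w z] d_1[of w "ant z"] d_le3[of w z] by auto

lemma sum_ant: "(\<Sum>z\<in>UNIV. f (ant z)) = (\<Sum>z\<in>UNIV. f z)"
  by (rule sum.reindex_bij_witness[where i=ant and j=ant]) auto

lemma Pa_comp[simp]: "(Pa *v v) $ w = v $ ant w" by (simp add: Pa_v)

lemma av_comp: "av x $ w = (if w = x then 1 else 0) - (if w = ant x then 1 else 0)"
  by (simp add: av_def)

lemma Pa_Pa: "Pa *v (Pa *v v) = v"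
  by (simp add: Pa_v vec_eq_iff)

lemma Am_Pa_comp: "(Am *v (Pa *v v)) $ w = (\<Sum>z\<in>UNIV. if E w (ant z) then v$z else 0)"
proof -
  have "(Am *v (Pa *v v)) $ w = (\<Sum>z\<in>UNIV. if E w z then v$(ant z) else 0)"
    by (simp add: Am_v Pa_v cong: if_cong)
  also have "\<dots> = (\<Sum>z\<in>UNIV. if E w (ant z) then v$(ant (ant z)) else 0)"
    by (rule sum_ant[symmetric])
  finally show ?thesis by (simp cong: if_cong)
qed

lemma Am_Pa: "Am *v (Pa *v v) = Pa *v (Am *v v)"
proof -
  have "\<And>w. (\<Sum>z\<in>UNIV. if E w (ant z) then v$z else 0) = (\<Sum>z\<in>UNIV. if E (ant w) z then v$z else 0)"
    using E_ant by (metis ant_ant)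
  note h = this
  show ?thesis
  proof (rule vec_eqI)
    fix w
    have "(Am *v (Pa *v v))$w = (\<Sum>z\<in>UNIV. if E (ant w) z then v$z else 0)"
      unfolding Am_Pa_comp by (rule h)
    then show "(Am *v (Pa *v v))$w = (Pa *v (Am *v v))$w" by (simp add: Am_v)
  qed
qed

lemma inner_one: "inner onev v = (\<Sum>z\<in>UNIV. v$z)"
  by (simp add: onev_def inner_vec_def)

lemma Am_plus: "Am *v v + Am *v (Pa *v v) = inner onev v *\<^sub>R onev - v - Pa *v v"
proof -
  have pt: "\<And>w z. (if E w z then v$z else 0) + (if E w (ant z) then v$z else 0)
     = v$z - (if z = w then v$z else 0) - (if z = ant w then v$z else 0)"
    subgoal for w z by (rule dist_cases[of w z]) (auto simp: E_ant2 irrE)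
    done
  have "\<And>w. (\<Sum>z\<in>UNIV. if E w z then v$z else 0) + (\<Sum>z\<in>UNIV. if E w (ant z) then v$z else 0)
      = (\<Sum>z\<in>UNIV. v$z) - v$w - v$(ant w)"
    by (simp add: sum.distrib[symmetric] pt sum_subtractf)
  note h = this
  show ?thesis
  proof (rule vec_eqI)
    fix w
    have "(Am *v v + Am *v (Pa *v v))$w = (\<Sum>z\<in>UNIV. v$z) - v$w - v$(ant w)"
      unfolding vector_add_component Am_Pa_comp unfolding Am_v by (rule h)
    then show "(Am *v v + Am *v (Pa *v v))$w = (inner onev v *\<^sub>R onev - v - Pa *v v)$w"
      by (simp add: inner_one)
  qed
qed

lemma Am_Am: "Am *v (Am *v v) = real k *\<^sub>R v + (real k - 1 - real bb) *\<^sub>R (Am *v v)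
    + real bb *\<^sub>R (inner onev v *\<^sub>R onev - v - Am *v v - Pa *v v)"
proof -
  have kb: "real (k - Suc bb) = real k - 1 - real bb" using bbk by auto
  { fix w
    have "(Am *v (Am *v v)) $ w = (\<Sum>u\<in>UNIV. if E w u then (\<Sum>z\<in>UNIV. if E u z then v$z else 0) else 0)"
      by (simp add: Am_v cong: if_cong)
    also have "\<dots> = (\<Sum>u\<in>UNIV. \<Sum>z\<in>UNIV. if E w u \<and> E u z then v$z else 0)"
      by (rule sum.cong) auto
    also have "\<dots> = (\<Sum>z\<in>UNIV. \<Sum>u\<in>UNIV. if E w u \<and> E u z then v$z else 0)"
      by (rule sum.swap)
    also have "\<dots> = (\<Sum>z\<in>UNIV. real (card {u. E w u \<and> E u z}) * v$z)"
      by (simp add: sum_if_const)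
    also have "\<dots> = (\<Sum>z\<in>UNIV. real k * (if z = w then v$z else 0) + (real k - 1 - real bb) * (if E w z then v$z else 0)
        + real bb * (v$z - (if z = w then v$z else 0) - (if E w z then v$z else 0) - (if z = ant w then v$z else 0)))"
      apply (rule sum.cong, simp)
      subgoal for z by (rule dist_cases[of w z]) (auto simp: cn kb algebra_simps)
      done
    also have "\<dots> = real k * v$w + (real k - 1 - real bb) * (\<Sum>z\<in>UNIV. if E w z then v$z else 0)
        + real bb * ((\<Sum>z\<in>UNIV. v$z) - v$w - (\<Sum>z\<in>UNIV. if E w z then v$z else 0) - v$(ant w))"
      by (simp add: sum.distrib sum_subtractf sum_distrib_left[symmetric])
    finally have "(Am *v (Am *v v)) $ w = \<dots>" .
  }
  note h = this
  show ?thesis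
    by (rule vec_eqI, subst h) (simp add: Am_v inner_one algebra_simps)
qed

lemma Dl_Pa: "Dl x *v (Pa *v v) = - (Pa *v (Dl x *v v))"
proof -
  have "\<And>w. d x (ant w) = 3 - d x w" using d_ant2 by simp
  then show ?thesis using d_le3 by (auto simp: vec_eq_iff Dl_v Pa_v)
qed

lemma F0_Pa: "F0 x *v (Pa *v v) = Pa *v (F0 x *v v)"
  by (auto simp: vec_eq_iff F0_v Pa_v)

lemma Dl_Dl: "Dl x *v (Dl x *v v) = v"
  by (simp add: vec_eq_iff Dl_v)

lemma Dl_F0: "Dl x *v (F0 x *v v) = F0 x *v (Dl x *v v)"
  by (simp add: vec_eq_iff Dl_v F0_v)

lemma Am_av: "(Am *v av x) $ w = (if E w x then 1 else 0) - (if E w (ant x) then 1 else 0)"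
  by (simp add: Am_v av_comp sum_delta2 cong: if_cong)

lemma Dl_one: "Dl x *v onev = Am *v av x + av x"
proof -
  have "\<And>w. (if d x w \<le> 1 then 1 else - 1) = ((if E w x then 1 else 0) - (if E w (ant x) then 1 else 0))
      + ((if w = x then 1 else 0) - (if w = ant x then (1::real) else 0))"
    subgoal for w by (rule dist_cases[of x w]) (auto simp: E_ant2 symE d_sym)
    done
  note h = this
  show ?thesis
    by (rule vec_eqI) (simp add: Dl_v Am_av av_comp h[symmetric])
qed

lemma inner_av: "inner (av x) v = v$x - v$(ant x)"
proof -
  have "inner (av x) v = (\<Sum>z\<in>UNIV. (if z = x then v$z else 0) - (if z = ant x then v$z else 0))"
    by (simp add: inner_vec_def av_def left_diff_distrib if10_mult)
  then show ?thesis by (simp add: sum_subtractf)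
qed

lemma F0_Pmm: "F0 x *v (Pmm *v v) = (inner (av x) v / 2) *\<^sub>R av x"
  by (auto simp: vec_eq_iff F0_v Pmm_v inner_av av_comp)

lemma av_A_av: "inner (av x) (Am *v av x) = 0"
  by (simp add: inner_av Am_av irrE symE E_ant2)

lemma av_av: "inner (av x) (av x) = 2"
  by (simp add: inner_av av_comp)

lemma Pa_av: "Pa *v av x = - av x"
  by (auto simp: vec_eq_iff av_comp)

lemma Pa_one: "Pa *v onev = onev"
  by (simp add: vec_eq_iff Pa_v onev_def)

lemma Am_sym: "inner u (Am *v v) = inner (Am *v u) v"
  by (rule sym_inner) (simp add: vec_eq_iff transpose_def Am_def symE)

lemma Pa_sym: "inner u (Pa *v v) = inner (Pa *v u) v"
  by (rule sym_inner) (auto simp: vec_eq_iff transpose_def Pa_def)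

lemma Dl_sym: "inner u (Dl x *v v) = inner (Dl x *v u) v"
  by (rule sym_inner) (simp add: vec_eq_iff transpose_def Dl_def)

lemma Es0: "Es x 0 *v v = (1/2) *\<^sub>R (F0 x *v v + F0 x *v (Dl x *v v))"
  by (simp add: vec_eq_iff Es_v F0_v Dl_v d_0 ant_d)
end


definition rt :: "'v::real_inner \<Rightarrow> 'v \<Rightarrow> 'v" where
  "rt v u = (2 / inner v v * inner v u) *\<^sub>R v"

lemma rt_half: "inner v u = inner v v / 2 \<Longrightarrow> rt v u = v"
proof (cases "v = 0")
  case False
  assume h: "inner v u = inner v v / 2"
  have "inner v v \<noteq> 0" using False by simp
  then have c1: "2 / inner v v * inner v u = 1" unfolding h by simp
  show ?thesis unfolding rt_def c1 by simp
qed (simp add: rt_def)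

lemma rt_mhalf: "inner v u = - inner v v / 2 \<Longrightarrow> rt v u = - v"
proof (cases "v = 0")
  case False
  assume h: "inner v u = - inner v v / 2"
  have "inner v v \<noteq> 0" using False by simp
  then have c1: "2 / inner v v * inner v u = -1" unfolding h by simp
  show ?thesis unfolding rt_def c1 by simp
qed (simp add: rt_def)

lemma rt_cong: "inner v u = inner v w \<Longrightarrow> rt v u = rt v w"
  by (simp add: rt_def)

lemma inner_rt_self: "inner v (rt v u) = 2 * inner v u"
  by (cases "v = 0") (auto simp: rt_def)

lemma inner_rt_orth: "inner w v = 0 \<Longrightarrow> inner w (rt v u) = 0"
  by (simp add: rt_def)

lemma rt_neg: "rt v (- u) = - rt v u"
  by (simp add: rt_def)

lemma inner_rt_sym: "inner u (rt v w) = inner (rt v u) w"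
  by (simp add: rt_def inner_commute)

lemma mv_neg: "M *v (- u) = - (M *v (u::real^'n))"
  by (metis add.inverse_neutral diff_0 matrix_vector_mult_0_right matrix_vector_mult_diff_distrib)

context taylor_ctx begin

lemma rt_A: "Am *v v = t *\<^sub>R v \<Longrightarrow> rt v (Am *v u) = Am *v (rt v u)"
proof -
  assume h: "Am *v v = t *\<^sub>R v"
  have "inner v (Am *v u) = t * inner v u" using Am_sym[of v u] h by simp
  then show ?thesis by (simp add: rt_def matrix_vector_mult_scaleR h)
qed

lemma rt_P: "Pa *v v = - v \<Longrightarrow> rt v (Pa *v u) = Pa *v (rt v u)"
proof -
  assume h: "Pa *v v = - v"
  have "inner v (Pa *v u) = - inner v u" using Pa_sym[of v u] h by simp
  then show ?thesis by (simp add: rt_def matrix_vector_mult_scaleR h)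
qed

definition "aa = real k - 1 - real bb - real bb"
definition "sq = sqrt (aa^2 + 4 * real k)"
definition "th1 = (aa + sq) / 2"
definition "th2 = (aa - sq) / 2"

lemma sq_pos: "sq > 0"
  unfolding sq_def using k_ge2 by (simp add: add_nonneg_pos)

lemma th_diff: "th1 - th2 = sq" by (simp add: th1_def th2_def field_simps)
lemma th_sum: "th1 + th2 = aa" by (simp add: th1_def th2_def field_simps)
lemma th_prod: "th1 * th2 = - real k"
proof -
  have "sq^2 = aa^2 + 4 * real k" unfolding sq_def by (simp add: add_nonneg_nonneg)
  then show ?thesis unfolding th1_def th2_def by (simp add: power2_eq_square algebra_simps)
qed

definition "dv x y = av x - av y"
definition "w1 x y = (1/sq) *\<^sub>R (Am *v dv x y - th2 *\<^sub>R dv x y)"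
definition "w2 x y = (-1/sq) *\<^sub>R (Am *v dv x y - th1 *\<^sub>R dv x y)"
definition "Hm x y = mat 1 - (2 / inner (w1 x y) (w1 x y)) *\<^sub>R outer (w1 x y) (w1 x y)
   - (2 / inner (w2 x y) (w2 x y)) *\<^sub>R outer (w2 x y) (w2 x y)"

lemma Hm_v: "Hm x y *v u = u - rt (w1 x y) u - rt (w2 x y) u"
  by (simp add: Hm_def matrix_vector_mult_diff_rdistrib scaleR_matrix_vector_assoc[symmetric] outer_v rt_def)

lemma Pa_dv: "Pa *v dv x y = - dv x y"
  by (simp add: dv_def matrix_vector_mult_diff_distrib Pa_av)

lemma one_av: "inner onev (av x) = 0"
  by (simp add: inner_commute[of onev] inner_av)

lemma one_dv: "inner onev (dv x y) = 0"
  by (simp add: dv_def inner_diff_right one_av)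

lemma AA_dv: "Am *v (Am *v dv x y) = real k *\<^sub>R dv x y + aa *\<^sub>R (Am *v dv x y)"
proof -
  have "Am *v (Am *v dv x y) = real k *\<^sub>R dv x y + (real k - 1 - real bb) *\<^sub>R (Am *v dv x y) + real bb *\<^sub>R (- (Am *v dv x y))"
    by (simp add: Am_Am one_dv Pa_dv)
  also have "\<dots> = real k *\<^sub>R dv x y + aa *\<^sub>R (Am *v dv x y)"
    by (simp add: vec_eq_iff aa_def algebra_simps)
  finally show ?thesis .
qed

lemma A_w1: "Am *v w1 x y = th1 *\<^sub>R w1 x y"
proof -
  have "Am *v w1 x y = (1/sq) *\<^sub>R (real k *\<^sub>R dv x y + (aa - th2) *\<^sub>R (Am *v dv x y))"
    by (simp add: w1_def matrix_vector_mult_scaleR matrix_vector_mult_diff_distrib AA_dv algebra_simps)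
  also have "\<dots> = (1/sq) *\<^sub>R (th1 *\<^sub>R (Am *v dv x y) - (th1 * th2) *\<^sub>R dv x y)"
    using th_sum[symmetric] th_prod by simp
  also have "\<dots> = th1 *\<^sub>R w1 x y"
    by (simp add: w1_def scaleR_right_diff_distrib)
  finally show ?thesis .
qed

lemma A_w2: "Am *v w2 x y = th2 *\<^sub>R w2 x y"
proof -
  have "Am *v w2 x y = (-1/sq) *\<^sub>R (real k *\<^sub>R dv x y + (aa - th1) *\<^sub>R (Am *v dv x y))"
    by (simp add: w2_def matrix_vector_mult_scaleR matrix_vector_mult_diff_distrib AA_dv algebra_simps)
  also have "\<dots> = (-1/sq) *\<^sub>R (th2 *\<^sub>R (Am *v dv x y) - (th1 * th2) *\<^sub>R dv x y)"
    using th_sum[symmetric] th_prod by simp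
  also have "\<dots> = th2 *\<^sub>R w2 x y"
    by (simp add: w2_def scaleR_right_diff_distrib)
  finally show ?thesis .
qed

lemma P_w1: "Pa *v w1 x y = - w1 x y"
  by (simp add: w1_def matrix_vector_mult_scaleR matrix_vector_mult_diff_distrib Am_Pa[symmetric] Pa_dv mv_neg scaleR_right_diff_distrib)

lemma P_w2: "Pa *v w2 x y = - w2 x y"
  by (simp add: w2_def matrix_vector_mult_scaleR matrix_vector_mult_diff_distrib Am_Pa[symmetric] Pa_dv mv_neg scaleR_right_diff_distrib)

lemma w_sum: "w1 x y + w2 x y = dv x y"
proof -
  have "w1 x y + w2 x y = (1/sq) *\<^sub>R ((th1 - th2) *\<^sub>R dv x y)"
    by (simp add: w1_def w2_def algebra_simps)
  then show ?thesis using th_diff sq_pos by simp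
qed

lemma w12: "inner (w1 x y) (w2 x y) = 0"
proof -
  let ?d = "dv x y"
  have AdAd: "inner (Am *v ?d) (Am *v ?d) = real k * inner ?d ?d + aa * inner ?d (Am *v ?d)"
    using Am_sym[of ?d "Am *v ?d"] by (simp add: AA_dv inner_add_right)
  have "inner (Am *v ?d - th2 *\<^sub>R ?d) (Am *v ?d - th1 *\<^sub>R ?d) =
     inner (Am *v ?d) (Am *v ?d) - (th1 + th2) * inner ?d (Am *v ?d) + th1 * th2 * inner ?d ?d"
    by (simp add: inner_diff_left inner_diff_right inner_commute algebra_simps)
  also have "\<dots> = 0" using AdAd th_sum th_prod by simp
  finally show ?thesis by (simp add: w1_def w2_def)
qed

lemma w_orth_plus: "inner (Am *v dv x y) (av x + av y) = 0" "inner (dv x y) (av x + av y) = 0"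
proof -
  have s: "inner (av x) (Am *v av y) = inner (av y) (Am *v av x)"
    using Am_sym[of "av x" "av y"] by (simp add: inner_commute)
  have "inner (Am *v dv x y) (av x + av y) = inner (dv x y) (Am *v (av x + av y))"
    using Am_sym[of "dv x y" "av x + av y"] by simp
  also have "\<dots> = inner (av x) (Am *v av x) + inner (av x) (Am *v av y) - inner (av y) (Am *v av x) - inner (av y) (Am *v av y)"
    by (simp add: dv_def inner_diff_left inner_add_right matrix_vector_right_distrib)
  also have "\<dots> = 0" using s av_A_av[of x] av_A_av[of y] by simp
  finally show "inner (Am *v dv x y) (av x + av y) = 0" .
  show "inner (dv x y) (av x + av y) = 0"
    using av_av[of x] av_av[of y]
    by (simp add: dv_def inner_diff_right inner_diff_left inner_add_left inner_add_right inner_commute[of "av y" "av x"])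
qed

lemma w_e: "inner (Am *v dv x y) (av y) = - inner (Am *v dv x y) (av x)"
   "inner (dv x y) (av y) = - inner (dv x y) (av x)"
  using w_orth_plus[of x y] by (simp_all add: inner_add_right)

lemma w1_ay: "inner (w1 x y) (av y) = - inner (w1 x y) (av x)"
  using sq_pos by (simp add: w1_def inner_diff_left w_e field_simps)

lemma w2_ay: "inner (w2 x y) (av y) = - inner (w2 x y) (av x)"
  using sq_pos by (simp add: w2_def inner_diff_left w_e field_simps)

lemma w1_ax: "inner (w1 x y) (av x) = inner (w1 x y) (w1 x y) / 2"
proof -
  have "inner (w1 x y) (w1 x y) = inner (w1 x y) (dv x y)"
    using w12[of x y] by (simp add: w_sum[symmetric] inner_add_right)
  then show ?thesis using w1_ay[of x y] by (simp add: dv_def inner_diff_right)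
qed

lemma w2_ax: "inner (w2 x y) (av x) = inner (w2 x y) (w2 x y) / 2"
proof -
  have "inner (w2 x y) (w2 x y) = inner (w2 x y) (dv x y)"
    using w12[of x y] by (simp add: w_sum[symmetric] inner_add_right inner_commute)
  then show ?thesis using w2_ay[of x y] by (simp add: dv_def inner_diff_right)
qed

lemma w21: "inner (w2 x y) (w1 x y) = 0" using w12 by (simp add: inner_commute)

lemma H_ax: "Hm x y *v av x = av y"
proof -
  have "Hm x y *v av x = av x - (w1 x y + w2 x y)"
    by (simp add: Hm_v rt_half w1_ax w2_ax)
  then show ?thesis by (simp add: w_sum dv_def)
qed

lemma H_ay: "Hm x y *v av y = av x"
proof -
  have "Hm x y *v av y = av y + (w1 x y + w2 x y)"
    by (simp add: Hm_v rt_mhalf w1_ay w2_ay w1_ax w2_ax)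
  then show ?thesis by (simp add: w_sum dv_def)
qed

lemma H_A: "Hm x y *v (Am *v u) = Am *v (Hm x y *v u)"
  by (simp add: Hm_v rt_A[OF A_w1] rt_A[OF A_w2] matrix_vector_mult_diff_distrib)

lemma H_P: "Hm x y *v (Pa *v u) = Pa *v (Hm x y *v u)"
  by (simp add: Hm_v rt_P[OF P_w1] rt_P[OF P_w2] matrix_vector_mult_diff_distrib)

lemma H_sym: "inner u (Hm x y *v v) = inner (Hm x y *v u) v"
  by (simp add: Hm_v inner_diff_right inner_diff_left inner_rt_sym)

lemma H_H: "Hm x y *v (Hm x y *v u) = u"
proof -
  have "rt (w1 x y) (Hm x y *v u) = rt (w1 x y) (- u)"
    by (rule rt_cong) (simp add: Hm_v inner_diff_right inner_rt_self inner_rt_orth w12)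
  moreover have "rt (w2 x y) (Hm x y *v u) = rt (w2 x y) (- u)"
    by (rule rt_cong) (simp add: Hm_v inner_diff_right inner_rt_self inner_rt_orth w21)
  ultimately show ?thesis
    by (subst (1) Hm_v) (simp add: rt_neg Hm_v)
qed

end


context taylor_ctx begin

lemma Es1: "Es x 1 *v v = (1/2) *\<^sub>R ((v - F0 x *v v) + (Dl x *v v - F0 x *v (Dl x *v v)))"
  apply (rule vec_eqI)
  subgoal for w by (rule dist_cases[of x w]) (auto simp: Es_v F0_v Dl_v)
  done

lemmas Es1' = Es1[unfolded One_nat_def]

lemma Es2: "Es x 2 *v v = (1/2) *\<^sub>R ((v - F0 x *v v) - (Dl x *v v - F0 x *v (Dl x *v v)))"
  apply (rule vec_eqI)
  subgoal for w by (rule dist_cases[of x w]) (auto simp: Es_v F0_v Dl_v)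
  done

lemma Es3: "Es x 3 *v v = (1/2) *\<^sub>R (F0 x *v v - F0 x *v (Dl x *v v))"
  apply (rule vec_eqI)
  subgoal for w by (rule dist_cases[of x w]) (auto simp: Es_v F0_v Dl_v)
  done

lemma Pm_P: "Pmm *v (Pa *v u) = - (Pmm *v u)"
  by (simp add: vec_eq_iff Pmm_v field_simps)

lemma P_Pm: "Pa *v (Pmm *v u) = - (Pmm *v u)"
  by (simp add: vec_eq_iff Pmm_v field_simps)

lemma Pm_Pm: "Pmm *v (Pmm *v u) = Pmm *v u"
  by (simp add: vec_eq_iff Pmm_v field_simps)

lemma Pm_fix: "Pa *v u = - u \<Longrightarrow> Pmm *v u = u"
  by (simp add: Pmm_v)

lemma Pm_zero: "Pa *v u = u \<Longrightarrow> Pmm *v u = 0"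
  by (simp add: Pmm_v)

lemma Pm_A: "Pmm *v (Am *v u) = Am *v (Pmm *v u)"
  by (simp add: Pmm_v Am_Pa matrix_vector_mult_diff_distrib matrix_vector_mult_scaleR)

lemma Pm_F0: "Pmm *v (F0 z *v u) = F0 z *v (Pmm *v u)"
  by (simp add: Pmm_v F0_Pa matrix_vector_mult_diff_distrib matrix_vector_mult_scaleR)

lemma Pm_sym: "inner u (Pmm *v v) = inner (Pmm *v u) v"
  by (simp add: Pmm_v inner_diff_right inner_diff_left Pa_sym)

lemma P_Dl: "Pa *v (Dl z *v u) = - (Dl z *v (Pa *v u))"
  using Dl_Pa[of z "Pa *v u"] by (simp add: Pa_Pa mv_neg)

lemma Pm_Dl_zero: "Pa *v w = - w \<Longrightarrow> Pmm *v (Dl z *v w) = 0"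
  by (simp add: Pmm_v P_Dl mv_neg)

lemma A_plus: "Pa *v w = w \<Longrightarrow> Am *v w = (inner onev w / 2) *\<^sub>R onev - w"
proof -
  assume h: "Pa *v w = w"
  have "Am *v w + Am *v w = inner onev w *\<^sub>R onev - w - w"
    using Am_plus[of w] h by simp
  note e = this
  show ?thesis
  proof (rule vec_eqI)
    fix i
    have "(Am *v w)$i + (Am *v w)$i = inner onev w - w$i - w$i"
      using arg_cong[OF e, of "\<lambda>v. v$i"] by simp
    then show "(Am *v w)$i = ((inner onev w / 2) *\<^sub>R onev - w)$i" by simp
  qed
qed

end

locale rho_ctx = taylor_ctx +
  fixes x y :: 'a and H :: "real^'a^'a"
  assumes H_A: "H *v (Am *v u) = Am *v (H *v u)"
  and H_P: "H *v (Pa *v u) = Pa *v (H *v u)"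
  and H_H: "H *v (H *v u) = u"
  and H_ax: "H *v av x = av y" and H_ay: "H *v av y = av x"
  and H_sym: "inner u (H *v v) = inner (H *v u) v"
begin

definition "Rm = H ** Pmm + Dl y ** H ** Pmm ** Dl x"
definition "Rinv = H ** Pmm + Dl x ** H ** Pmm ** Dl y"

definition "Kv u = Dl y *v (H *v (Pmm *v (Dl x *v u)))"

lemma Rm_v: "Rm *v u = H *v (Pmm *v u) + Kv u"
  by (simp add: Rm_def Kv_def matrix_vector_mult_add_rdistrib matrix_vector_mul_assoc[symmetric])

lemma Rinv_v: "Rinv *v u = H *v (Pmm *v u) + Dl x *v (H *v (Pmm *v (Dl y *v u)))"
  by (simp add: Rinv_def matrix_vector_mult_add_rdistrib matrix_vector_mul_assoc[symmetric])

lemma Pm_H: "Pmm *v (H *v u) = H *v (Pmm *v u)"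
  by (simp add: Pmm_v H_P matrix_vector_mult_diff_distrib matrix_vector_mult_scaleR)

lemma Kv_add: "Kv (u + w) = Kv u + Kv w"
  by (simp add: Kv_def matrix_vector_right_distrib)

lemma Kv_diff: "Kv (u - w) = Kv u - Kv w"
  by (simp add: Kv_def matrix_vector_mult_diff_distrib)

lemma Kv_scale: "Kv (c *\<^sub>R u) = c *\<^sub>R Kv u"
  by (simp add: Kv_def matrix_vector_mult_scaleR)

lemma K_P: "Pa *v Kv u = Kv u"
  by (simp add: Kv_def P_Dl H_P[symmetric] P_Pm mv_neg)

lemma K_Pin: "Kv (Pa *v u) = Kv u"
  by (simp add: Kv_def Dl_Pa mv_neg Pm_P)

lemma g_P: "Pa *v (Am *v av z + av z) = - (Am *v av z + av z)"
  by (simp add: matrix_vector_right_distrib Am_Pa[symmetric] Pa_av mv_neg)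

lemma K_one: "Kv onev = onev"
proof -
  have "Pmm *v (Dl x *v onev) = Dl x *v onev" by (simp add: Dl_one Pm_fix g_P)
  moreover have "H *v (Dl x *v onev) = Dl y *v onev"
    by (simp add: Dl_one matrix_vector_right_distrib H_A H_ax)
  ultimately show ?thesis by (simp add: Kv_def Dl_Dl)
qed

lemma K_sum: "inner onev (Kv u) = inner onev u"
proof -
  have "inner onev (Kv u) = inner (Dl y *v onev) (H *v (Pmm *v (Dl x *v u)))"
    by (simp add: Kv_def Dl_sym)
  also have "\<dots> = inner (H *v (Dl y *v onev)) (Pmm *v (Dl x *v u))"
    by (simp add: H_sym)
  also have "H *v (Dl y *v onev) = Dl x *v onev"
    by (simp add: Dl_one matrix_vector_right_distrib H_A H_ay)
  also have "inner (Dl x *v onev) (Pmm *v (Dl x *v u)) = inner (Pmm *v (Dl x *v onev)) (Dl x *v u)"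
    by (simp add: Pm_sym)
  also have "Pmm *v (Dl x *v onev) = Dl x *v onev" by (simp add: Dl_one Pm_fix g_P)
  also have "inner (Dl x *v onev) (Dl x *v u) = inner onev u"
    by (simp add: Dl_sym Dl_Dl)
  finally show ?thesis .
qed

lemma K_A: "Kv (Am *v u) = Am *v Kv u"
proof -
  have "Kv (Am *v u) + Kv (Am *v u) = Kv (Am *v u + Am *v (Pa *v u))"
    by (simp add: Kv_add Am_Pa K_Pin)
  also have "\<dots> = inner onev u *\<^sub>R onev - Kv u - Kv u"
    by (simp add: Am_plus Kv_diff Kv_scale K_one K_Pin)
  finally have e: "Kv (Am *v u) + Kv (Am *v u) = inner onev u *\<^sub>R onev - Kv u - Kv u" .
  have "Am *v Kv u = (inner onev u / 2) *\<^sub>R onev - Kv u"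
    using A_plus[OF K_P[of u]] by (simp add: K_sum)
  note f = this
  show ?thesis
  proof (rule vec_eqI)
    fix i
    have "(Kv (Am *v u))$i + (Kv (Am *v u))$i = inner onev u - (Kv u)$i - (Kv u)$i"
      using arg_cong[OF e, of "\<lambda>v. v$i"] by simp
    then show "(Kv (Am *v u))$i = (Am *v Kv u)$i" using f by simp
  qed
qed

lemma R_A: "Rm *v (Am *v u) = Am *v (Rm *v u)"
  by (simp add: Rm_v Pm_A H_A K_A matrix_vector_right_distrib)

lemma HF: "H *v (Pmm *v (F0 x *v u)) = F0 y *v (H *v (Pmm *v u))"
proof -
  have "H *v (Pmm *v (F0 x *v u)) = H *v (F0 x *v (Pmm *v (Pmm *v u)))"
    by (simp add: Pm_F0 Pm_Pm)
  also have "\<dots> = (inner (av x) (Pmm *v u) / 2) *\<^sub>R av y"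
    by (simp add: F0_Pmm matrix_vector_mult_scaleR H_ax)
  also have "\<dots> = F0 y *v (Pmm *v (H *v (Pmm *v u)))"
    by (simp add: F0_Pmm H_sym H_ay)
  also have "\<dots> = F0 y *v (H *v (Pmm *v u))"
    by (simp add: Pm_H Pm_Pm)
  finally show ?thesis .
qed

lemma R_Dl: "Rm *v (Dl x *v u) = Dl y *v (Rm *v u)"
  by (simp add: Rm_v Kv_def Dl_Dl matrix_vector_right_distrib)

lemma R_F0: "Rm *v (F0 x *v u) = F0 y *v (Rm *v u)"
proof -
  have "Kv (F0 x *v u) = F0 y *v Kv u"
    by (simp add: Kv_def Dl_F0 HF)
  then show ?thesis by (simp add: Rm_v HF matrix_vector_right_distrib)
qed

lemma R_Es: "i \<le> 3 \<Longrightarrow> Rm *v (Es x i *v u) = Es y i *v (Rm *v u)"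
proof -
  assume "i \<le> 3"
  then consider "i = 0" | "i = 1" | "i = 2" | "i = 3" by linarith
  then show ?thesis
    by cases (simp_all add: Es0 Es1 Es1' Es2 Es3 matrix_vector_mult_scaleR matrix_vector_right_distrib
       matrix_vector_mult_diff_distrib R_F0 R_Dl)
qed

lemma R_inv: "Rinv *v (Rm *v u) = u"
proof -
  have a: "Pmm *v (Rm *v u) = H *v (Pmm *v u)"
    by (simp add: Rm_v matrix_vector_right_distrib Pm_H Pm_Pm Pm_zero[OF K_P])
  have b0: "Pa *v (H *v (Pmm *v u)) = - (H *v (Pmm *v u))"
    by (simp add: H_P[symmetric] P_Pm mv_neg)
  have b1: "Pmm *v (Dl y *v (H *v (Pmm *v u))) = 0"
    by (rule Pm_Dl_zero[OF b0])
  have b: "Pmm *v (Dl y *v (Rm *v u)) = H *v (Pmm *v (Dl x *v u))"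
    by (simp add: Rm_v Kv_def matrix_vector_right_distrib Dl_Dl b1 Pm_H Pm_Pm)
  have c: "Dl x *v (Pmm *v (Dl x *v u)) = (1/2) *\<^sub>R (u + Pa *v u)"
    by (simp add: Pmm_v matrix_vector_mult_diff_distrib matrix_vector_mult_scaleR Dl_Dl P_Dl[symmetric]
       Dl_Pa)
  show ?thesis
    by (simp add: Rinv_v a b H_H c) (simp add: Pmm_v vec_eq_iff algebra_simps)
qed

end


lemma matrix_add_rdistrib': "((A::'a::semiring_1^'n^'m) + B) ** C = A ** C + B ** C"
  by (simp add: vec_eq_iff matrix_matrix_mult_def sum.distrib distrib_right)

lemma cms_left: "cmat_scale c M ** N = cmat_scale c (M ** N)"
  by (simp add: vec_eq_iff cmat_scale_def matrix_matrix_mult_def sum_distrib_left mult.assoc)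

lemma cms_right: "M ** cmat_scale c N = cmat_scale c (M ** N)"
  by (simp add: vec_eq_iff cmat_scale_def matrix_matrix_mult_def sum_distrib_left mult.left_commute)

lemma mv_smult: "(C::complex^'n^'m) *v (c *s v) = c *s (C *v v)"
  by (simp add: vec_eq_iff matrix_vector_mult_def sum_distrib_left mult.left_commute)

lemma gen_image:
  assumes add: "\<And>M N. f (M + N) = f M + f N"
    and mul: "\<And>M N. f (M ** N) = f M ** f N"
    and sc: "\<And>c M. f (cmat_scale c M) = cmat_scale c (f M)"
    and one: "f (mat 1) = mat 1"
    and gens: "\<And>M. M \<in> S \<Longrightarrow> f M \<in> gen_algebra S'"
  shows "M \<in> gen_algebra S \<Longrightarrow> f M \<in> gen_algebra S'"
proof (induction M rule: gen_algebra.induct)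
  case (gen M) then show ?case by (rule gens)
next
  case one then show ?case by (simp add: assms(4) gen_algebra.one)
next
  case (add M N) then show ?case by (simp add: assms(1) gen_algebra.add)
next
  case (scale M c) then show ?case by (simp add: assms(3) gen_algebra.scale)
next
  case (mult M N) then show ?case by (simp add: assms(2) gen_algebra.mult)
qed

lemma conj_hom:
  fixes D D' M N :: "'b::comm_ring_1^'a::finite^'a"
  assumes h: "D' ** D = mat 1"
  shows "D ** (M ** N) ** D' = (D ** M ** D') ** (D ** N ** D')"
proof -
  have "(D ** M ** D') ** (D ** N ** D') = D ** M ** (D' ** D) ** N ** D'"
    by (simp add: matrix_mul_assoc)
  then show ?thesis by (simp add: h matrix_mul_assoc)
qed

lemma conj_iso:
  fixes C C' :: "complex^'a::finite^'a"
  assumes CC: "C ** C' = mat 1" and CC': "C' ** C = mat 1"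
    and g1: "\<And>M. M \<in> S \<Longrightarrow> C ** M ** C' \<in> gen_algebra S'"
    and g2: "\<And>M. M \<in> S' \<Longrightarrow> C' ** M ** C \<in> gen_algebra S"
  shows "calg_iso (\<lambda>M. C ** M ** C') (gen_algebra S) (gen_algebra S')"
proof -
  note hom = conj_hom
  have addh: "\<And>D D' M N. D ** (M + N) ** (D'::complex^'a^'a) = D ** M ** D' + D ** N ** D'"
    by (simp add: matrix_add_ldistrib matrix_add_rdistrib')
  have sch: "\<And>D D' c M. D ** cmat_scale c M ** (D'::complex^'a^'a) = cmat_scale c (D ** M ** D')"
    by (simp add: cms_left cms_right)
  have im1: "\<And>M. M \<in> gen_algebra S \<Longrightarrow> C ** M ** C' \<in> gen_algebra S'"
    by (rule gen_image[where f="\<lambda>M. C ** M ** C'"]) (auto simp: hom CC' addh sch CC g1)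
  have im2: "\<And>M. M \<in> gen_algebra S' \<Longrightarrow> C' ** M ** C \<in> gen_algebra S"
    by (rule gen_image[where f="\<lambda>M. C' ** M ** C"]) (auto simp: hom CC addh sch CC' g2)
  have inv1: "\<And>M. C' ** (C ** M ** C') ** C = M"
    by (simp add: matrix_mul_assoc CC') (simp add: matrix_mul_assoc[symmetric] CC')
  have inv2: "\<And>M. C ** (C' ** M ** C) ** C' = M"
    by (simp add: matrix_mul_assoc CC) (simp add: matrix_mul_assoc[symmetric] CC)
  have "bij_betw (\<lambda>M. C ** M ** C') (gen_algebra S) (gen_algebra S')"
    by (rule bij_betw_byWitness[where f'="\<lambda>M. C' ** M ** C"]) (auto simp: inv1 inv2 im1 im2)
  then show ?thesis unfolding calg_iso_def
    by (simp add: hom CC' addh sch CC)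
qed

definition cx :: "real^'n^'m \<Rightarrow> complex^'n^'m" where "cx M = map_matrix complex_of_real M"

lemma cx_mult: "cx (M ** N) = cx M ** cx N"
  by (simp add: vec_eq_iff cx_def matrix_matrix_mult_def)

lemma cx_one: "cx (mat 1) = mat 1"
  by (simp add: vec_eq_iff cx_def mat_def)

context rho_ctx begin

lemma Rm_Am: "Rm ** Am = Am ** Rm"
  by (simp add: matrix_eq matrix_vector_mul_assoc[symmetric] R_A)

lemma Rm_Es: "i \<le> 3 \<Longrightarrow> Rm ** Es x i = Es y i ** Rm"
  by (simp add: matrix_eq matrix_vector_mul_assoc[symmetric] R_Es)

lemma Rinv_Rm: "Rinv ** Rm = mat 1"
  by (simp add: matrix_eq matrix_vector_mul_assoc[symmetric] R_inv)

lemma Rm_Rinv: "Rm ** Rinv = mat 1"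
proof -
  interpret sw: rho_ctx E k bb y x H
    by unfold_locales (simp_all add: H_A H_P H_H H_ax H_ay H_sym)
  have "sw.Rm = Rinv" by (simp add: sw.Rm_def Rinv_def)
  moreover have "sw.Rinv = Rm" by (simp add: sw.Rinv_def Rm_def)
  ultimately show ?thesis using sw.Rinv_Rm by simp
qed

lemma adj_cx: "adj_matrix E = cx Am"
  by (simp add: vec_eq_iff adj_matrix_def cx_def Am_def)

lemma dual_cx: "dual_idem E z i = cx (Es z i)"
  by (simp add: vec_eq_iff dual_idem_def cx_def Es_def)

lemma pvt_xy:
  "(\<exists>\<phi>. calg_iso \<phi> (terwilliger E 3 x) (terwilliger E 3 y) \<and>
          \<phi> (adj_matrix E) = adj_matrix E \<and>
          (\<forall>i\<le>3. \<phi> (dual_idem E x i) = dual_idem E y i)) \<and>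
     (\<exists>\<rho>. clinear_vec \<rho> \<and> bij \<rho> \<and>
          (\<forall>v. \<rho> (adj_matrix E *v v) = adj_matrix E *v \<rho> v) \<and>
          (\<forall>i\<le>3. \<forall>v. \<rho> (dual_idem E x i *v v) = dual_idem E y i *v \<rho> v))"
proof -
  define C where "C = cx Rm"
  define C' where "C' = cx Rinv"
  have CC: "C ** C' = mat 1" unfolding C_def C'_def by (simp add: cx_mult[symmetric] Rm_Rinv cx_one)
  have CC': "C' ** C = mat 1" unfolding C_def C'_def by (simp add: cx_mult[symmetric] Rinv_Rm cx_one)
  have CA: "C ** adj_matrix E = adj_matrix E ** C"
    unfolding C_def adj_cx by (simp add: cx_mult[symmetric] Rm_Am)
  have CE: "\<And>i. i \<le> 3 \<Longrightarrow> C ** dual_idem E x i = dual_idem E y i ** C"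
    unfolding C_def dual_cx by (simp add: cx_mult[symmetric] Rm_Es)
  have C'A: "C' ** adj_matrix E = adj_matrix E ** C'"
  proof -
    have "C' ** adj_matrix E = C' ** (adj_matrix E ** C) ** C'"
      by (simp add: matrix_mul_assoc[symmetric] CC)
    also have "\<dots> = C' ** (C ** adj_matrix E) ** C'" by (simp add: CA)
    also have "\<dots> = adj_matrix E ** C'" by (simp add: matrix_mul_assoc CC')
    finally show ?thesis .
  qed
  have C'E: "\<And>i. i \<le> 3 \<Longrightarrow> C' ** dual_idem E y i = dual_idem E x i ** C'"
  proof -
    fix i :: nat assume i: "i \<le> 3"
    have "C' ** dual_idem E y i = C' ** (dual_idem E y i ** C) ** C'"
      by (simp add: matrix_mul_assoc[symmetric] CC)
    also have "\<dots> = C' ** (C ** dual_idem E x i) ** C'" by (simp add: CE i)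
    also have "\<dots> = dual_idem E x i ** C'" by (simp add: matrix_mul_assoc CC')
    finally show "C' ** dual_idem E y i = dual_idem E x i ** C'" .
  qed
  have phiA: "C ** adj_matrix E ** C' = adj_matrix E"
    by (simp add: CA matrix_mul_assoc[symmetric] CC)
  have phiE: "\<And>i. i \<le> 3 \<Longrightarrow> C ** dual_idem E x i ** C' = dual_idem E y i"
    by (simp add: CE matrix_mul_assoc[symmetric] CC)
  have psiA: "C' ** adj_matrix E ** C = adj_matrix E"
    by (simp add: C'A matrix_mul_assoc[symmetric] CC')
  have psiE: "\<And>i. i \<le> 3 \<Longrightarrow> C' ** dual_idem E y i ** C = dual_idem E x i"
    by (simp add: C'E matrix_mul_assoc[symmetric] CC')
  have iso: "calg_iso (\<lambda>M. C ** M ** C') (terwilliger E 3 x) (terwilliger E 3 y)"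
    unfolding terwilliger_def
  proof (rule conj_iso[OF CC CC'])
    fix M assume "M \<in> insert (adj_matrix E) {dual_idem E x i |i. i \<le> 3}"
    then show "C ** M ** C' \<in> gen_algebra (insert (adj_matrix E) {dual_idem E y i |i. i \<le> 3})"
      using phiA phiE by (auto intro: gen_algebra.gen)
  next
    fix M assume "M \<in> insert (adj_matrix E) {dual_idem E y i |i. i \<le> 3}"
    then show "C' ** M ** C \<in> gen_algebra (insert (adj_matrix E) {dual_idem E x i |i. i \<le> 3})"
      using psiA psiE by (auto intro: gen_algebra.gen)
  qed
  have part1: "\<exists>\<phi>. calg_iso \<phi> (terwilliger E 3 x) (terwilliger E 3 y) \<and>
          \<phi> (adj_matrix E) = adj_matrix E \<and>
          (\<forall>i\<le>3. \<phi> (dual_idem E x i) = dual_idem E y i)"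
    using iso phiA phiE by blast
  have lin: "clinear_vec (\<lambda>v. C *v v)"
    by (simp add: clinear_vec_def matrix_vector_right_distrib mv_smult)
  have bj: "bij (\<lambda>v. C *v v)"
    by (rule o_bij[where g="\<lambda>v. C' *v v"]) (simp_all add: fun_eq_iff matrix_vector_mul_assoc CC CC')
  have part2: "\<exists>\<rho>. clinear_vec \<rho> \<and> bij \<rho> \<and>
          (\<forall>v. \<rho> (adj_matrix E *v v) = adj_matrix E *v \<rho> v) \<and>
          (\<forall>i\<le>3. \<forall>v. \<rho> (dual_idem E x i *v v) = dual_idem E y i *v \<rho> v)"
    by (rule exI[where x="\<lambda>v. C *v v"])
       (simp add: lin bj matrix_vector_mul_assoc CA CE)
  show ?thesis using part1 part2 by blast
qed

end

theorem theorem7p6: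
  fixes E :: "'a::finite \<Rightarrow> 'a \<Rightarrow> bool"
  assumes "taylor_graph E"
  shows "pseudo_vertex_transitive E 3"
proof -
  obtain k bb where tc: "taylor_ctx E k bb"
    using assms unfolding taylor_graph_def taylor_ctx_def by blast
  interpret taylor_ctx E k bb by (rule tc)
  show ?thesis unfolding pseudo_vertex_transitive_def
  proof (intro allI)
    fix x y
    interpret r: rho_ctx E k bb x y "Hm x y"
      by unfold_locales (simp_all add: H_A H_P H_H H_ax H_ay H_sym)
    show "(\<exists>\<phi>. calg_iso \<phi> (terwilliger E 3 x) (terwilliger E 3 y) \<and>
          \<phi> (adj_matrix E) = adj_matrix E \<and>
          (\<forall>i\<le>3. \<phi> (dual_idem E x i) = dual_idem E y i)) \<and>
     (\<exists>\<rho>. clinear_vec \<rho> \<and> bij \<rho> \<and>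
          (\<forall>v. \<rho> (adj_matrix E *v v) = adj_matrix E *v \<rho> v) \<and>
          (\<forall>i\<le>3. \<forall>v. \<rho> (dual_idem E x i *v v) = dual_idem E y i *v \<rho> v))"
      by (rule r.pvt_xy)
  qed
qed


end
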